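(* Let $\alpha>0$ and $v>-\frac{7}{8}$, and let $$w_{\alpha,v}(z)=z+\sum_{n=1}^{\infty}a_n z^{n+1},\qquad a_n=\frac{(-1)^n(2n+\alpha)}{\alpha\, 4^n\, n!\,(v+1)_n},$$ for $z\in\mathcal{U}=\{z\in\mathbb{C}:|z|<1\}$, and for a nonnegative integer $m$ let $(w_{\alpha,v})_m(z)=z+\sum_{n=1}^{m}a_n z^{n+1}$ be its $m$-th partial sum. If $$8(\alpha-4)v+5\alpha-32\ge 0,$$ then for all $z\in\mathcal{U}$, $$\operatorname{Re}\left\{\frac{w_{\alpha,v}(z)}{(w_{\alpha,v})_m(z)}\right\}\ge \frac{8(\alpha-4)v+5\alpha-32}{(8v+7)\alpha}$$ and $$\operatorname{Re}\left\{\frac{(w_{\alpha,v})_m(z)}{w_{\alpha,v}(z)}\right\}\ge \frac{(8v+7)\alpha}{(8v+7)\alpha+32v+2\alpha+32}.$$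
   Context: $(\mu)_n=\mu(\mu+1)\cdots(\mu+n-1)$ is the Pochhammer symbol. The function $w_{\alpha,v}$ is the normalized Dini function $\frac{2^v}{\alpha}\Gamma(v+1)z^{1-v/2}\big((\alpha-v)J_v(\sqrt z)+\sqrt z J_v'(\sqrt z)\big)$, with $J_v$ the Bessel function of the first kind. The quotients are understood as analytic functions on $\mathcal{U}$ (taking the value $1$ at $z=0$). *)

theory Defs
  imports "HOL-Analysis.Analysis"
begin

definition dini_coeff :: "real \<Rightarrow> real \<Rightarrow> nat \<Rightarrow> real" where
  "dini_coeff \<alpha> v n =
     (-1) ^ n * (2 * real n + \<alpha>) / (\<alpha> * 4 ^ n * fact n * pochhammer (v + 1) n)"

definition dini_w :: "real \<Rightarrow> real \<Rightarrow> complex \<Rightarrow> complex" where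
  "dini_w \<alpha> v z = z + (\<Sum>n. complex_of_real (dini_coeff \<alpha> v (Suc n)) * z ^ (Suc n + 1))"

definition dini_w_partial :: "real \<Rightarrow> real \<Rightarrow> nat \<Rightarrow> complex \<Rightarrow> complex" where
  "dini_w_partial \<alpha> v m z = z + (\<Sum>n=1..m. complex_of_real (dini_coeff \<alpha> v n) * z ^ (n + 1))"

text \<open>Quotients understood as analytic functions on the unit disc, value 1 at z = 0.\<close>
definition analytic_quot :: "(complex \<Rightarrow> complex) \<Rightarrow> (complex \<Rightarrow> complex) \<Rightarrow> complex \<Rightarrow> complex" where
  "analytic_quot f g z = (if z = 0 then 1 else f z / g z)"

end

theory Submission
  imports Defs
begin

lemma frac_le_helper: "(b::real) > 0 \<Longrightarrow> d > 0 \<Longrightarrow> a*d \<le> c*b \<Longrightarrow> a/b \<le> c/d"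
  by (simp add: divide_simps)

lemma poch_ge: "(x::real) > 0 \<Longrightarrow> x^k \<le> pochhammer x k"
proof (induction k)
  case (Suc k)
  have "x^Suc k = x^k * x" by simp
  also have "\<dots> \<le> pochhammer x k * (x + real k)"
    by (rule mult_mono) (use Suc in \<open>auto intro: pochhammer_nonneg\<close>)
  finally show ?case by (simp add: pochhammer_Suc)
qed simp

lemma fact_ge2: "(2::real)^k \<le> fact (Suc k)"
proof (induction k)
  case (Suc k)
  have "(2::real)^Suc k = 2 * 2^k" by simp
  also have "\<dots> \<le> (real (Suc (Suc k))) * fact (Suc k)"
    by (rule mult_mono) (use Suc in auto)
  finally show ?case by simp
qed simp

lemma key_ineq:
  fixes x \<alpha> :: real assumes a: "\<alpha> > 0" and x: "x > 1/8"
  shows "(2*real (Suc k)+\<alpha>) * 2^Suc k * x^Suc k \<le> (32*x+2*\<alpha>) * fact (Suc k) * pochhammer x (Suc k)"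
proof -
  define Q where "Q = pochhammer x k"
  define F where "F = (fact (Suc k) :: real)"
  have Q: "x^k \<le> Q" using poch_ge x unfolding Q_def by auto
  have xk: "0 < x^k" using x by simp
  have F: "2^k \<le> F" using fact_ge2 unfolding F_def by auto
  have F1: "real (Suc k) * 2^k \<le> real (Suc k) * F" using F by simp
  have P: "pochhammer x (Suc k) = Q * (x + real k)" by (simp add: Q_def pochhammer_Suc)
  have h1: "\<alpha> * 2^Suc k * x^Suc k \<le> 2*\<alpha> * F * pochhammer x (Suc k)"
  proof -
    have f2: "x^Suc k \<le> pochhammer x (Suc k)" using poch_ge[of x "Suc k"] x by auto
    have f1: "\<alpha> * 2^Suc k \<le> 2*\<alpha>*F" using F a by simp
    have "F \<ge> 0" unfolding F_def by simp
    have "(\<alpha> * 2^Suc k) * x^Suc k \<le> (2*\<alpha>*F) * pochhammer x (Suc k)"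
      by (rule mult_mono[OF f1 f2]) (use a x \<open>F \<ge> 0\<close> in auto)
    thus ?thesis by simp
  qed
  have h2: "2*real (Suc k) * 2^Suc k * x^Suc k \<le> 32*x * F * pochhammer x (Suc k)"
  proof -
    have e: "32 * (x + real k) \<ge> 4 * real (Suc k)" using x by simp
    have "2*real (Suc k) * 2^Suc k * x^Suc k = (4 * real (Suc k) * 2^k) * (x * x^k)" by simp
    also have "\<dots> \<le> (32 * (x + real k) * F) * (x * Q)"
    proof (rule mult_mono)
      have "F \<ge> 0" unfolding F_def by simp
      have "4 * real (Suc k) * 2^k = 4 * (real (Suc k) * 2^k)" by simp
      also have "\<dots> \<le> 4 * (real (Suc k) * F)" using F1 by simp
      also have "\<dots> = (4 * real (Suc k)) * F" by simp
      also have "\<dots> \<le> 32 * (x + real k) * F" using e \<open>F \<ge> 0\<close> by (rule mult_right_mono)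
      finally show "4 * real (Suc k) * 2^k \<le> 32 * (x + real k) * F" .
      show "x * x^k \<le> x * Q" using Q x by simp
      show "0 \<le> 32 * (x + real k) * F" using x \<open>F \<ge> 0\<close> by simp
      show "0 \<le> x * x^k" using x by simp
    qed
    also have "\<dots> = 32*x * F * pochhammer x (Suc k)" by (simp add: P algebra_simps)
    finally show ?thesis .
  qed
  show ?thesis using h1 h2 unfolding F_def by (simp add: algebra_simps)
qed

lemma coeff_bound:
  fixes \<alpha> v :: real assumes a: "\<alpha> > 0" and v: "v > -7/8"
  shows "\<bar>dini_coeff \<alpha> v (Suc k)\<bar> \<le> ((32*(v+1)+2*\<alpha>)/\<alpha>) * (1/(8*(v+1)))^Suc k"
proof -
  define x where "x = v + 1"
  have x: "x > 1/8" using v unfolding x_def by simp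
  define n where "n = Suc k"
  define P where "P = pochhammer x n"
  define F where "F = (fact n :: real)"
  define N where "N = 2*real n + \<alpha>"
  have Pp: "P > 0" unfolding P_def using x by (intro pochhammer_pos) auto
  have Fp: "F > 0" unfolding F_def by simp
  have Np: "N > 0" unfolding N_def using a by simp
  have key: "N * 2^n * x^n \<le> (32*x+2*\<alpha>) * F * P"
    using key_ineq[OF a x, of k] unfolding N_def F_def P_def n_def by simp
  have "\<bar>dini_coeff \<alpha> v n\<bar> = N / (\<alpha> * 4^n * F * P)"
    unfolding dini_coeff_def N_def F_def P_def x_def using a Pp Fp Np
    by (simp add: abs_mult abs_divide N_def P_def x_def F_def)
  also have "\<dots> \<le> (32*x+2*\<alpha>) / (\<alpha> * (8*x)^n)"
  proof -
    have "N * (\<alpha> * (8*x)^n) = \<alpha> * 4^n * (N * 2^n * x^n)"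
    proof -
      have "(8::real)^n = 4^n * 2^n" by (metis power_mult_distrib num_double numeral_times_numeral mult.commute)
      thus ?thesis by (simp add: power_mult_distrib)
    qed
    also have "\<dots> \<le> \<alpha> * 4^n * ((32*x+2*\<alpha>) * F * P)"
      using key a by simp
    finally have "N * (\<alpha> * (8*x)^n) \<le> (32*x+2*\<alpha>) * (\<alpha> * 4^n * F * P)"
      by (simp add: algebra_simps)
    moreover have "\<alpha> * (8*x)^n > 0" "\<alpha> * 4^n * F * P > 0" using a x Fp Pp by auto
    ultimately show ?thesis using frac_le_helper by blast
  qed
  also have "\<dots> = ((32*(v+1)+2*\<alpha>)/\<alpha>) * (1/(8*(v+1)))^n"
    unfolding x_def by (simp add: power_divide)
  finally show ?thesis unfolding n_def .
qed

lemma coeff_sum: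
  fixes \<alpha> v :: real assumes a: "\<alpha> > 0" and v: "v > -7/8"
  shows "summable (\<lambda>k. \<bar>dini_coeff \<alpha> v (Suc k)\<bar>) \<and>
    (\<Sum>k. \<bar>dini_coeff \<alpha> v (Suc k)\<bar>) \<le> (32* v+2*\<alpha>+32)/((8* v+7)*\<alpha>)"
proof -
  define K where "K = (32*(v+1)+2*\<alpha>)/\<alpha>"
  define q where "q = 1/(8*(v+1))"
  have q0: "q > 0" "q < 1" using v unfolding q_def by (auto simp: field_simps)
  have sg: "summable (\<lambda>k. K * q^Suc k)"
    using summable_geometric[of q] q0 by (intro summable_mult) (simp add: summable_Suc_iff)
  have le: "\<And>k. \<bar>dini_coeff \<alpha> v (Suc k)\<bar> \<le> K * q^Suc k"
    using coeff_bound[OF a v] unfolding K_def q_def by blast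
  have s1: "summable (\<lambda>k. \<bar>dini_coeff \<alpha> v (Suc k)\<bar>)"
    by (rule summable_comparison_test[OF _ sg]) (use le in auto)
  have "(\<Sum>k. \<bar>dini_coeff \<alpha> v (Suc k)\<bar>) \<le> (\<Sum>k. K * q^Suc k)"
    by (rule suminf_le[OF le s1 sg])
  also have "(\<Sum>k. K * q^Suc k) = K * q / (1 - q)"
  proof -
    have "(\<Sum>k. K * q^Suc k) = (\<Sum>k. (K*q) * q^k)" by (simp add: mult.assoc)
    also have "\<dots> = (K*q) * (\<Sum>k. q^k)"
      by (rule suminf_mult) (rule summable_geometric, use q0 in simp)
    also have "\<dots> = K*q/(1-q)" using suminf_geometric[of q] q0 by simp
    finally show ?thesis .
  qed
  also have "\<dots> = (32* v+2*\<alpha>+32)/((8* v+7)*\<alpha>)"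
  proof -
    have h1: "8 * v + 7 > 0" "v + 1 > 0" using v by auto
    have gen: "\<And>y::real. y > 1 \<Longrightarrow> K * (1/y) / (1 - 1/y) = K / (y - 1)"
      by (simp add: divide_simps)
    have "K * q / (1 - q) = K / (8*(v+1) - 1)" unfolding q_def using h1 by (intro gen) auto
    also have "8*(v+1) - 1 = 8 * v + 7" by simp
    finally have "K * q / (1 - q) = K / (8 * v + 7)" .
    also have "\<dots> = (32 * v+2*\<alpha>+32)/((8 * v+7)*\<alpha>)" unfolding K_def using h1 a by (simp add: field_simps)
    finally show ?thesis .
  qed
  finally show ?thesis using s1 by blast
qed

lemma re_inv_bound:
  fixes u :: complex assumes "norm u < 1"
  shows "Re (1/(1+u)) \<ge> 1/(1 + norm u)"
proof -
  define x where "x = Re u"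
  define y where "y = Im u"
  define r where "r = norm u"
  have r2: "r^2 = x^2 + y^2" unfolding r_def x_def y_def by (simp add: cmod_power2)
  have xr: "\<bar>x\<bar> \<le> r" unfolding r_def x_def by (rule abs_Re_le_cmod)
  have r1: "r < 1" "r \<ge> 0" using assms unfolding r_def by auto
  have e: "Re (1/(1+u)) = (1+x) / ((1+x)^2 + y^2)"
    unfolding x_def y_def by (simp add: Re_divide)
  have d1: "(1+x)^2 + y^2 > 0" using xr r1 by (smt (verit) zero_le_power2 zero_less_power2)
  have "1 * ((1+x)^2 + y^2) \<le> (1+x) * (1+r)"
  proof -
    have "(1+x)^2 + y^2 = 1 + 2*x + r^2" using r2 by (simp add: power2_eq_square algebra_simps)
    moreover have "(1-r)*(r-x) \<ge> 0" using xr r1 by (intro mult_nonneg_nonneg) auto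
    ultimately show ?thesis by (simp add: algebra_simps power2_eq_square)
  qed
  hence "1/(1+r) \<le> (1+x) / ((1+x)^2 + y^2)"
    by (intro frac_le_helper) (use r1 d1 in auto)
  thus ?thesis using e unfolding r_def by simp
qed

theorem theorem2p1:
  fixes \<alpha> v :: real and m :: nat and z :: complex
  assumes "\<alpha> > 0" and "v > -7/8"
    and "8 * (\<alpha> - 4) * v + 5 * \<alpha> - 32 \<ge> 0"
    and "norm z < 1"
  shows "(Re (analytic_quot (dini_w \<alpha> v) (dini_w_partial \<alpha> v m) z)
           \<ge> (8 * (\<alpha> - 4) * v + 5 * \<alpha> - 32) / ((8 * v + 7) * \<alpha>)) \<and>
         (Re (analytic_quot (dini_w_partial \<alpha> v m) (dini_w \<alpha> v) z)
           \<ge> (8 * v + 7) * \<alpha> / ((8 * v + 7) * \<alpha> + 32 * v + 2 * \<alpha> + 32))"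
proof -
  note a = assms(1) and vv = assms(2) and cond = assms(3) and zz = assms(4)
  define D where "D = (32 * v+2*\<alpha>+32)/((8 * v+7)*\<alpha>)"
  have pos: "(8 * v + 7) * \<alpha> > 0" using a vv by auto
  have Dpos: "D > 0" unfolding D_def using pos a vv by (intro divide_pos_pos) auto
  have D1: "D \<le> 1" unfolding D_def using pos cond by (simp add: divide_simps algebra_simps)
  have b1: "(8 * (\<alpha> - 4) * v + 5 * \<alpha> - 32) / ((8 * v + 7) * \<alpha>) = 1 - D"
    unfolding D_def using pos by (simp add: divide_simps algebra_simps)
  have b2: "(8 * v + 7) * \<alpha> / ((8 * v + 7) * \<alpha> + 32 * v + 2 * \<alpha> + 32) = 1 / (1 + D)"
    unfolding D_def using pos a vv by (simp add: divide_simps algebra_simps)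
  define A where "A = (\<lambda>k. \<bar>dini_coeff \<alpha> v (Suc k)\<bar>)"
  have As: "summable A" and Ale: "suminf A \<le> D"
    using coeff_sum[OF a vv] unfolding A_def D_def by auto
  have A0: "\<And>k. A k \<ge> 0" unfolding A_def by simp
  show ?thesis
  proof (cases "z = 0")
    case True
    thus ?thesis unfolding analytic_quot_def b1 b2 using Dpos by (simp add: divide_simps)
  next
    case False
    define r where "r = norm z"
    have r: "r > 0" "r < 1" using False zz unfolding r_def by auto
    define b where "b = (\<lambda>k. complex_of_real (dini_coeff \<alpha> v (Suc k)) * z^Suc k)"
    define s where "s = (\<lambda>k. A k * r^Suc k)"
    have nb: "\<And>k. norm (b k) = s k" unfolding b_def s_def A_def r_def by (simp add: norm_mult norm_power)
    have sle: "\<And>k. s k \<le> r * A k"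
    proof -
      fix k
      have "r^Suc k \<le> r" using r by (simp add: power_le_one mult_left_le)
      thus "s k \<le> r * A k" unfolding s_def using A0[of k] by (metis mult.commute mult_left_mono)
    qed
    have s0: "\<And>k. s k \<ge> 0" unfolding s_def using A0 r by simp
    have ss: "summable s"
      by (rule summable_comparison_test[OF _ summable_mult[OF As, of r]]) (use sle s0 in auto)
    have bs: "summable b"
      by (rule summable_comparison_test[OF _ ss]) (use nb in auto)
    have sumS: "suminf s < D"
    proof -
      have "suminf s \<le> (\<Sum>k. r * A k)" by (rule suminf_le[OF sle ss summable_mult[OF As]])
      also have "\<dots> = r * suminf A" by (rule suminf_mult[OF As])
      also have "\<dots> \<le> r * D" using Ale r by (simp add: mult_left_mono)
      also have "\<dots> < D" using r Dpos by simp
      finally show ?thesis .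
    qed
    define H0 where "H0 = (\<Sum>k<m. b k)"
    define T where "T = (\<Sum>k. b (k + m))"
    define H where "H = (\<Sum>k<m. s k)"
    define Tl where "Tl = (\<Sum>k. s (k + m))"
    have split: "suminf s = Tl + H" unfolding Tl_def H_def by (rule suminf_split_initial_segment[OF ss])
    have Tl0: "Tl \<ge> 0" unfolding Tl_def using s0 summable_ignore_initial_segment[OF ss] by (simp add: suminf_nonneg)
    have H0n: "norm H0 \<le> H" unfolding H0_def H_def using norm_sum[of b "{..<m}"] nb by simp
    have Tn: "norm T \<le> Tl"
    proof -
      have "summable (\<lambda>k. norm (b (k + m)))"
        using summable_ignore_initial_segment[OF ss, of m] nb by simp
      hence "norm T \<le> (\<Sum>k. norm (b (k + m)))" unfolding T_def by (rule summable_norm)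
      thus ?thesis unfolding Tl_def using nb by simp
    qed
    have H0le: "H \<ge> 0" unfolding H_def using s0 by (simp add: sum_nonneg)
    define P where "P = 1 + H0"
    have HD: "H + Tl < D" using split sumS by simp
    have Pn: "norm P \<ge> 1 - H"
    proof -
      have "norm (1::complex) \<le> norm P + norm H0" unfolding P_def
        by (metis add_diff_cancel_right' norm_triangle_ineq4 add.commute)
      thus ?thesis using H0n by simp
    qed
    have H1: "H < 1" using HD Tl0 D1 by simp
    have Pnz: "P \<noteq> 0" using Pn H1 by auto
    define u where "u = T / P"
    have un: "norm u \<le> D"
    proof -
      have "norm u = norm T / norm P" unfolding u_def by (simp add: norm_divide)
      also have "\<dots> \<le> Tl / (1 - H)" using Tn Pn H1 Tl0 by (intro frac_le) auto
      also have "\<dots> \<le> D"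
      proof -
        have "D * H \<le> H" using mult_right_mono[OF D1 H0le] by simp
        hence "Tl \<le> D - D * H" using HD by linarith
        thus ?thesis using H1 by (simp add: divide_simps algebra_simps)
      qed
      finally show ?thesis .
    qed
    have un1: "norm u < 1"
    proof -
      have "norm u = norm T / norm P" unfolding u_def by (simp add: norm_divide)
      also have "\<dots> \<le> Tl / (1 - H)" using Tn Pn H1 Tl0 by (intro frac_le) auto
      also have "\<dots> < 1" using HD D1 H1 by (simp add: divide_simps)
      finally show ?thesis .
    qed
    have wz: "dini_w \<alpha> v z = z * (P + T)"
    proof -
      have "(\<Sum>n. complex_of_real (dini_coeff \<alpha> v (Suc n)) * z ^ (Suc n + 1)) = (\<Sum>n. z * b n)"
        unfolding b_def by (simp add: algebra_simps)
      also have "\<dots> = z * suminf b" by (rule suminf_mult[OF bs])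
      also have "suminf b = T + H0" unfolding T_def H0_def by (rule suminf_split_initial_segment[OF bs])
      finally show ?thesis unfolding dini_w_def P_def by (simp add: algebra_simps)
    qed
    have wm: "dini_w_partial \<alpha> v m z = z * P"
    proof -
      have "(\<Sum>n=1..m. complex_of_real (dini_coeff \<alpha> v n) * z ^ (n + 1)) = (\<Sum>k<m. z * b k)"
        unfolding b_def by (subst sum_bounds_lt_plus1[symmetric]) (simp add: algebra_simps)
      also have "\<dots> = z * H0" unfolding H0_def by (simp add: sum_distrib_left)
      finally show ?thesis unfolding dini_w_partial_def P_def by (simp add: algebra_simps)
    qed
    have q1: "analytic_quot (dini_w \<alpha> v) (dini_w_partial \<alpha> v m) z = 1 + u"
      unfolding analytic_quot_def wz wm u_def using False Pnz by (simp add: field_simps)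
    have PT: "P + T \<noteq> 0"
    proof
      assume "P + T = 0"
      hence "u = -1" unfolding u_def using Pnz by (simp add: field_simps eq_neg_iff_add_eq_0 add.commute)
      thus False using un1 by simp
    qed
    have q2: "analytic_quot (dini_w_partial \<alpha> v m) (dini_w \<alpha> v) z = 1 / (1 + u)"
    proof -
      have "z * P / (z * (P + T)) = P / (P + T)" using False by simp
      also have "\<dots> = 1 / (1 + u)" unfolding u_def using Pnz PT by (simp add: field_simps)
      finally show ?thesis unfolding analytic_quot_def wz wm using False by simp
    qed
    have r1: "Re (1 + u) \<ge> 1 - D"
    proof -
      have "- Re u \<le> norm u" using abs_Re_le_cmod[of u] by linarith
      thus ?thesis using un by simp
    qed
    have r2: "Re (1/(1+u)) \<ge> 1/(1+D)"
    proof -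
      have "1/(1+D) \<le> 1/(1 + norm u)" using un Dpos by (intro divide_left_mono) (auto intro!: mult_pos_pos add_pos_nonneg)
      thus ?thesis using re_inv_bound[OF un1] by linarith
    qed
    show ?thesis unfolding q1 q2 b1 b2 using r1 r2 by simp
  qed
qed

end
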